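(* Let $(D^n,\omega_h^n)_{n\in\mathbb N}$ be a solution of the discrete linearized scheme described in the context, with discrete free energy $\mathcal E^n$. Then for all $n\ge0$, $$ \frac{\mathcal E^{n+1}-\mathcal E^n}{\Delta t}+\Delta t\,\mathcal R_h^n=-\frac{1}{\varepsilon\tau_0}\sum_{k=1}^{N_H}k\,\|D^{n+1}_k\|_{l^2(\mathbb T)}^2, $$ where $$ \mathcal R_h^n=\frac12\Big(\Big\|\frac{D^{n+1}-D^n}{\Delta t}\Big\|_{l^2}^2+\Big\|\frac{\mathcal A_h(\omega_h^{n+1}-\omega_h^n)}{\Delta t\,\sqrt{\rho}_\infty}\Big\|_{l^2(\mathbb T)}^2\Big)\ge0 . $$
   Context: Discrete setting. Fix $T_0>0$, $\varepsilon>0$, $\tau_0>0$, a time step $\Delta t>0$, an integer $N_H\ge1$, and an interval $(a,b)$ with periodic boundary conditions (a torus $\mathbb T$). Take a mesh $a=x_{1/2}<x_1<x_{3/2}<\dots<x_{N_x}<x_{N_x+1/2}=b$, cells $K_j=(x_{j-1/2},x_{j+1/2})$, $\Delta x_j=x_{j+1/2}-x_{j-1/2}$, $j\in\mathcal J=\{1,\dots,N_x\}$; cell indices are understood periodically modulo $N_x$. For grid functions $D=(D_j)_{j\in\mathcal J}$, $G=(G_j)_{j\in\mathcal J}$ set $\langle D,G\rangle_{l^2(\mathbb T)}=\sum_{j\in\mathcal J}\Delta x_j D_jG_j$ and $\|D\|_{l^2(\mathbb T)}^2=\langle D,D\rangle_{l^2(\mathbb T)}$; products and quotients of grid functions are taken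 componentwise. $(\rho_{\infty,j})_{j\in\mathcal J}$ are positive numbers (approximations of the equilibrium density), and $\sqrt{\rho}_\infty$ denotes the grid function $(\sqrt{\rho_{\infty,j}})_j$. Define $E_{\infty,j}=\frac{2T_0}{\sqrt{\rho_{\infty,j}}}\,\frac{\sqrt{\rho_{\infty,j+1}}-\sqrt{\rho_{\infty,j-1}}}{2\Delta x_j}$ and the discrete operators $$ (\mathcal A_hD)_j=\sqrt{T_0}\,\frac{D_{j+1}-D_{j-1}}{2\Delta x_j}-\frac{E_{\infty,j}}{2\sqrt{T_0}}D_j,\qquad (\mathcal A_h^\star D)_j=-\sqrt{T_0}\,\frac{D_{j+1}-D_{j-1}}{2\Delta x_j}-\frac{E_{\infty,j}}{2\sqrt{T_0}}D_j , $$ which are adjoint with respect to $\langle\cdot,\cdot\rangle_{l^2(\mathbb T)}$. Discrete linearized scheme: $D^n=(D^n_k)_{0\le k\le N_H}$, each $D^n_k$ a grid function, and grid functions $\omega^n_h$, satisfy for all $n\ge0$ $$ \varepsilon\frac{D^{n+1}_1-D^n_1}{\Delta t}+\mathcal A_hD^{n+1}_0-\sqrt2\,\mathcal A_h^\star D^{n+1}_2+\mathcal A_h\omega_h^{n+1}=-\frac1{\tau_0}D^{n+1}_1, $$ $$ \varepsilon\frac{D^{n+1}_k-D^n_k}{\Delta t}+\sqrt k\,\mathcal A_hD^{n+1}_{k-1}-\sqrt{k+1}\,\mathcal A_h^\star D^{n+1}_{k+1}=-\frac{k}{\tau_0}D^{n+1}_k,\quad k\in\{0,\dots,N_H\}\setminus\{1\},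 $$ with the convention $D^{n+1}_{-1}=D^{n+1}_{N_H+1}=0$, and for all $n\ge0$ (including $n=0$ for $\omega_h^0$) $$ \mathcal A_h^\star\big(\rho_\infty^{-1}\mathcal A_h\omega_h^{n}\big)=D^{n}_0-\sqrt{\rho}_\infty,\qquad \sum_{j\in\mathcal J}\Delta x_j\,\omega^{n}_{h,j}\,\rho_{\infty,j}^{-1/2}=0 . $$ Discrete equilibrium: $D_{\infty,0}=\sqrt{\rho}_\infty$, $D_{\infty,k}=0$ for $1\le k\le N_H$. Discrete free energy: $$ \mathcal E^n=\frac12\Big(\|D^n-D_\infty\|_{l^2}^2+\Big\|\frac{\mathcal A_h\omega_h^n}{\sqrt{\rho}_\infty}\Big\|_{l^2(\mathbb T)}^2\Big),\qquad \|D\|_{l^2}^2=\sum_{k=0}^{N_H}\|D_k\|_{l^2(\mathbb T)}^2 . $$ *)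

theory Defs
  imports Complex_Main
begin

text \<open>Periodic mesh with Nx cells, indexed by j in {0..<Nx} (cell j here is K_(j+1) of the paper).
  Grid functions are maps nat => real, only their values on {0..<Nx} matter.\<close>

definition nxt :: "nat \<Rightarrow> nat \<Rightarrow> nat" where
  "nxt Nx j = (j + 1) mod Nx"

definition prv :: "nat \<Rightarrow> nat \<Rightarrow> nat" where
  "prv Nx j = (j + Nx - 1) mod Nx"

definition l2ip :: "nat \<Rightarrow> (nat \<Rightarrow> real) \<Rightarrow> (nat \<Rightarrow> real) \<Rightarrow> (nat \<Rightarrow> real) \<Rightarrow> real" where
  "l2ip Nx dx D G = (\<Sum>j<Nx. dx j * D j * G j)"

definition l2sq :: "nat \<Rightarrow> (nat \<Rightarrow> real) \<Rightarrow> (nat \<Rightarrow> real) \<Rightarrow> real" where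
  "l2sq Nx dx D = l2ip Nx dx D D"

definition Einf :: "real \<Rightarrow> nat \<Rightarrow> (nat \<Rightarrow> real) \<Rightarrow> (nat \<Rightarrow> real) \<Rightarrow> nat \<Rightarrow> real" where
  "Einf T0 Nx dx rho j =
     2 * T0 / sqrt (rho j) * ((sqrt (rho (nxt Nx j)) - sqrt (rho (prv Nx j))) / (2 * dx j))"

definition Ah :: "real \<Rightarrow> nat \<Rightarrow> (nat \<Rightarrow> real) \<Rightarrow> (nat \<Rightarrow> real) \<Rightarrow> (nat \<Rightarrow> real) \<Rightarrow> nat \<Rightarrow> real" where
  "Ah T0 Nx dx rho D j =
     sqrt T0 * (D (nxt Nx j) - D (prv Nx j)) / (2 * dx j) - Einf T0 Nx dx rho j / (2 * sqrt T0) * D j"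

definition Ahs :: "real \<Rightarrow> nat \<Rightarrow> (nat \<Rightarrow> real) \<Rightarrow> (nat \<Rightarrow> real) \<Rightarrow> (nat \<Rightarrow> real) \<Rightarrow> nat \<Rightarrow> real" where
  "Ahs T0 Nx dx rho D j =
     - sqrt T0 * (D (nxt Nx j) - D (prv Nx j)) / (2 * dx j) - Einf T0 Nx dx rho j / (2 * sqrt T0) * D j"

definition Dinf :: "(nat \<Rightarrow> real) \<Rightarrow> nat \<Rightarrow> nat \<Rightarrow> real" where
  "Dinf rho k j = (if k = 0 then sqrt (rho j) else 0)"

text \<open>Solution D n k j (time level n, Hermite mode k, cell j), omega n j.\<close>
definition scheme ::
  "real \<Rightarrow> real \<Rightarrow> real \<Rightarrow> real \<Rightarrow> nat \<Rightarrow> nat \<Rightarrow> (nat \<Rightarrow> real) \<Rightarrow> (nat \<Rightarrow> real)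
   \<Rightarrow> (nat \<Rightarrow> nat \<Rightarrow> nat \<Rightarrow> real) \<Rightarrow> (nat \<Rightarrow> nat \<Rightarrow> real) \<Rightarrow> bool" where
  "scheme T0 eps tau0 dt NH Nx dx rho D \<omega> \<longleftrightarrow>
     (\<forall>n j. j < Nx \<longrightarrow>
        eps * (D (Suc n) 1 j - D n 1 j) / dt + Ah T0 Nx dx rho (D (Suc n) 0) j
        - sqrt 2 * (if 2 \<le> NH then Ahs T0 Nx dx rho (D (Suc n) 2) j else 0)
        + Ah T0 Nx dx rho (\<omega> (Suc n)) j
        = - (1 / tau0) * D (Suc n) 1 j)
   \<and> (\<forall>n k j. k \<le> NH \<longrightarrow> k \<noteq> 1 \<longrightarrow> j < Nx \<longrightarrow>
        eps * (D (Suc n) k j - D n k j) / dt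
        + (if k = 0 then 0 else sqrt (real k) * Ah T0 Nx dx rho (D (Suc n) (k - 1)) j)
        - (if k + 1 \<le> NH then sqrt (real (k + 1)) * Ahs T0 Nx dx rho (D (Suc n) (k + 1)) j else 0)
        = - (real k / tau0) * D (Suc n) k j)
   \<and> (\<forall>n j. j < Nx \<longrightarrow>
        Ahs T0 Nx dx rho (\<lambda>i. Ah T0 Nx dx rho (\<omega> n) i / rho i) j = D n 0 j - sqrt (rho j))
   \<and> (\<forall>n. (\<Sum>j<Nx. dx j * \<omega> n j / sqrt (rho j)) = 0)"

definition energy ::
  "real \<Rightarrow> nat \<Rightarrow> nat \<Rightarrow> (nat \<Rightarrow> real) \<Rightarrow> (nat \<Rightarrow> real)
   \<Rightarrow> (nat \<Rightarrow> nat \<Rightarrow> nat \<Rightarrow> real) \<Rightarrow> (nat \<Rightarrow> nat \<Rightarrow> real) \<Rightarrow> nat \<Rightarrow> real" where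
  "energy T0 NH Nx dx rho D \<omega> n =
     1/2 * ((\<Sum>k\<le>NH. l2sq Nx dx (\<lambda>j. D n k j - Dinf rho k j))
            + l2sq Nx dx (\<lambda>j. Ah T0 Nx dx rho (\<omega> n) j / sqrt (rho j)))"

definition Rh ::
  "real \<Rightarrow> real \<Rightarrow> nat \<Rightarrow> nat \<Rightarrow> (nat \<Rightarrow> real) \<Rightarrow> (nat \<Rightarrow> real)
   \<Rightarrow> (nat \<Rightarrow> nat \<Rightarrow> nat \<Rightarrow> real) \<Rightarrow> (nat \<Rightarrow> nat \<Rightarrow> real) \<Rightarrow> nat \<Rightarrow> real" where
  "Rh T0 dt NH Nx dx rho D \<omega> n =
     1/2 * ((\<Sum>k\<le>NH. l2sq Nx dx (\<lambda>j. (D (Suc n) k j - D n k j) / dt))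
            + l2sq Nx dx (\<lambda>j. Ah T0 Nx dx rho (\<lambda>i. \<omega> (Suc n) i - \<omega> n i) j / (dt * sqrt (rho j))))"

end

theory Submission
  imports Defs
begin


lemma prv_nxt: "Nx \<ge> 1 \<Longrightarrow> j < Nx \<Longrightarrow> prv Nx (nxt Nx j) = j"
  unfolding prv_def nxt_def
proof -
  assume h: "Nx \<ge> 1" "j < Nx"
  have "((j + 1) mod Nx + Nx - 1) mod Nx = ((j + 1) mod Nx + (Nx - 1)) mod Nx" using h by simp
  also have "\<dots> = (j + 1 + (Nx - 1)) mod Nx" by (simp add: mod_add_left_eq)
  also have "\<dots> = (j + Nx) mod Nx" using h by simp
  also have "\<dots> = j" using h by simp
  finally show "((j + 1) mod Nx + Nx - 1) mod Nx = j" .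
qed

lemma nxt_prv: "Nx \<ge> 1 \<Longrightarrow> j < Nx \<Longrightarrow> nxt Nx (prv Nx j) = j"
  unfolding prv_def nxt_def
proof -
  assume h: "Nx \<ge> 1" "j < Nx"
  have "((j + Nx - 1) mod Nx + 1) mod Nx = Suc ((j + Nx - 1) mod Nx) mod Nx" by simp
  also have "\<dots> = Suc (j + Nx - 1) mod Nx" by (simp add: mod_Suc_eq)
  also have "\<dots> = (j + Nx) mod Nx" using h by simp
  also have "\<dots> = j" using h by simp
  finally show "((j + Nx - 1) mod Nx + 1) mod Nx = j" .
qed

lemma nxt_lt: "Nx \<ge> 1 \<Longrightarrow> nxt Nx j < Nx" unfolding nxt_def by simp
lemma prv_lt: "Nx \<ge> 1 \<Longrightarrow> prv Nx j < Nx" unfolding prv_def by simp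

lemma sum_nxt_shift:
  assumes "Nx \<ge> 1"
  shows "(\<Sum>j<Nx. f (nxt Nx j) * g j) = (\<Sum>j<Nx. f j * g (prv Nx j))"
  by (rule sum.reindex_bij_witness[where i="prv Nx" and j="nxt Nx"])
     (auto simp: assms prv_nxt nxt_prv nxt_lt prv_lt)

lemma sum_prv_shift:
  assumes "Nx \<ge> 1"
  shows "(\<Sum>j<Nx. f (prv Nx j) * g j) = (\<Sum>j<Nx. f j * g (nxt Nx j))"
  by (rule sum.reindex_bij_witness[where i="nxt Nx" and j="prv Nx"])
     (auto simp: assms prv_nxt nxt_prv nxt_lt prv_lt)

lemma l2ip_cong:
  "(\<And>j. j < Nx \<Longrightarrow> f j = f' j) \<Longrightarrow> (\<And>j. j < Nx \<Longrightarrow> g j = g' j)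
   \<Longrightarrow> l2ip Nx dx f g = l2ip Nx dx f' g'"
  unfolding l2ip_def by (rule sum.cong) auto

lemma l2ip_sym: "l2ip Nx dx f g = l2ip Nx dx g f"
  unfolding l2ip_def by (simp add: mult_ac)

lemma l2ip_scale: "l2ip Nx dx f (\<lambda>j. c * g j) = c * l2ip Nx dx f g"
  unfolding l2ip_def by (simp add: sum_distrib_left mult_ac)

lemma l2ip_diff1: "l2ip Nx dx (\<lambda>j. f j - h j) g = l2ip Nx dx f g - l2ip Nx dx h g"
  unfolding l2ip_def by (simp add: sum_subtractf[symmetric] algebra_simps)

lemma l2ip_diff2: "l2ip Nx dx f (\<lambda>j. g j - h j) = l2ip Nx dx f g - l2ip Nx dx f h"
  unfolding l2ip_def by (simp add: sum_subtractf[symmetric] algebra_simps)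

lemma l2ip_add2: "l2ip Nx dx f (\<lambda>j. g j + h j) = l2ip Nx dx f g + l2ip Nx dx f h"
  unfolding l2ip_def by (simp add: sum.distrib[symmetric] algebra_simps)

lemma l2ip_zero1: "l2ip Nx dx (\<lambda>j. 0) g = 0"
  unfolding l2ip_def by simp

lemma l2ip_if2: "l2ip Nx dx f (\<lambda>j. if P then g j else 0) = (if P then l2ip Nx dx f g else 0)"
  unfolding l2ip_def by simp

lemma l2ip_neg_scale: "l2ip Nx dx f (\<lambda>j. - c * g j) = - c * l2ip Nx dx f g"
  unfolding l2ip_def by (simp add: sum_distrib_left sum_negf[symmetric] mult_ac)

lemma l2ip_negdiv: "l2ip Nx dx f (\<lambda>j. - (c * g j / d)) = - (c * l2ip Nx dx f g / d)"
  unfolding l2ip_def by (simp add: sum_distrib_left sum_divide_distrib sum_negf[symmetric] mult_ac)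

lemma l2ip_negdiv1: "l2ip Nx dx f (\<lambda>j. - (g j / d)) = - (l2ip Nx dx f g / d)"
  unfolding l2ip_def by (simp add: sum_distrib_left sum_divide_distrib sum_negf[symmetric] mult_ac)

lemma l2ip_zero2: "l2ip Nx dx f (\<lambda>j. 0) = 0"
  unfolding l2ip_def by simp

lemma Ah_diff: "Ah T0 Nx dx rho (\<lambda>i. a i - b i) j = Ah T0 Nx dx rho a j - Ah T0 Nx dx rho b j"
  unfolding Ah_def by (simp add: diff_divide_distrib right_diff_distrib left_diff_distrib)

lemma Ahs_diff: "Ahs T0 Nx dx rho (\<lambda>i. a i - b i) j = Ahs T0 Nx dx rho a j - Ahs T0 Nx dx rho b j"
  unfolding Ahs_def by (simp add: diff_divide_distrib right_diff_distrib left_diff_distrib)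

lemma adjoint:
  assumes "Nx \<ge> 1" "\<And>j. j < Nx \<Longrightarrow> dx j > 0"
  shows "l2ip Nx dx (Ah T0 Nx dx rho D) G = l2ip Nx dx D (Ahs T0 Nx dx rho G)"
proof -
  let ?E = "Einf T0 Nx dx rho"
  have dxnz: "\<And>j. j < Nx \<Longrightarrow> dx j \<noteq> 0" using assms(2) by force
  have "l2ip Nx dx (Ah T0 Nx dx rho D) G =
     (\<Sum>j<Nx. sqrt T0 / 2 * (D (nxt Nx j) * G j) - sqrt T0 / 2 * (D (prv Nx j) * G j)
        - dx j * ?E j / (2 * sqrt T0) * D j * G j)"
    unfolding l2ip_def Ah_def
    by (rule sum.cong[OF refl]) (simp add: field_simps dxnz)
  also have "\<dots> = sqrt T0 / 2 * (\<Sum>j<Nx. D (nxt Nx j) * G j) - sqrt T0 / 2 * (\<Sum>j<Nx. D (prv Nx j) * G j)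
        - (\<Sum>j<Nx. dx j * ?E j / (2 * sqrt T0) * D j * G j)"
    by (simp add: sum_subtractf sum_distrib_left)
  also have "\<dots> = sqrt T0 / 2 * (\<Sum>j<Nx. D j * G (prv Nx j)) - sqrt T0 / 2 * (\<Sum>j<Nx. D j * G (nxt Nx j))
        - (\<Sum>j<Nx. dx j * ?E j / (2 * sqrt T0) * D j * G j)"
    using assms(1) by (simp add: sum_nxt_shift sum_prv_shift)
  also have "\<dots> = (\<Sum>j<Nx. sqrt T0 / 2 * (D j * G (prv Nx j)) - sqrt T0 / 2 * (D j * G (nxt Nx j))
        - dx j * ?E j / (2 * sqrt T0) * D j * G j)"
    by (simp add: sum_subtractf sum_distrib_left)
  also have "\<dots> = l2ip Nx dx D (Ahs T0 Nx dx rho G)"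
    unfolding l2ip_def Ahs_def
    by (rule sum.cong[OF refl]) (simp add: field_simps dxnz)
  finally show ?thesis .
qed

lemma Ah_sqrt_rho:
  assumes "T0 > 0" "rho j > 0"
  shows "Ah T0 Nx dx rho (\<lambda>i. sqrt (rho i)) j = 0"
proof -
  define s where "s = sqrt T0"
  have T: "T0 = s * s" "s > 0" using assms by (simp_all add: s_def)
  have "sqrt (rho j) > 0" using assms by simp
  then show ?thesis using T unfolding Ah_def Einf_def s_def[symmetric]
    by (cases "dx j = 0") (simp_all add: field_simps)
qed

lemma L1:
  assumes "dt \<noteq> 0"
  shows "l2sq Nx dx (\<lambda>j. f j - c j) - l2sq Nx dx (\<lambda>j. g j - c j) + dt^2 * l2sq Nx dx (\<lambda>j. (f j - g j) / dt)
     = 2 * l2ip Nx dx (\<lambda>j. f j - c j) (\<lambda>j. f j - g j)"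
proof -
  have "l2sq Nx dx (\<lambda>j. f j - c j) - l2sq Nx dx (\<lambda>j. g j - c j) + dt^2 * l2sq Nx dx (\<lambda>j. (f j - g j) / dt)
     = (\<Sum>j<Nx. dx j * (f j - c j) * (f j - c j) - dx j * (g j - c j) * (g j - c j)
          + dt^2 * (dx j * ((f j - g j) / dt) * ((f j - g j) / dt)))"
    unfolding l2sq_def l2ip_def by (simp add: sum_subtractf sum.distrib sum_distrib_left)
  also have "\<dots> = (\<Sum>j<Nx. 2 * (dx j * (f j - c j) * (f j - g j)))"
    by (rule sum.cong[OF refl]) (use assms in \<open>simp add: field_simps power2_eq_square\<close>)
  also have "\<dots> = 2 * l2ip Nx dx (\<lambda>j. f j - c j) (\<lambda>j. f j - g j)"
    unfolding l2ip_def by (simp add: sum_distrib_left)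
  finally show ?thesis .
qed

lemma L2:
  assumes "dt \<noteq> 0" "\<And>j. Z j = X j - Y j"
  shows "l2sq Nx dx (\<lambda>j. X j / s j) - l2sq Nx dx (\<lambda>j. Y j / s j) + dt^2 * l2sq Nx dx (\<lambda>j. Z j / (dt * s j))
     = 2 * l2ip Nx dx (\<lambda>j. X j / s j) (\<lambda>j. Z j / s j)"
proof -
  have "l2sq Nx dx (\<lambda>j. X j / s j) - l2sq Nx dx (\<lambda>j. Y j / s j) + dt^2 * l2sq Nx dx (\<lambda>j. Z j / (dt * s j))
     = (\<Sum>j<Nx. dx j * (X j / s j) * (X j / s j) - dx j * (Y j / s j) * (Y j / s j)
          + dt^2 * (dx j * (Z j / (dt * s j)) * (Z j / (dt * s j))))"
    unfolding l2sq_def l2ip_def by (simp add: sum_subtractf sum.distrib sum_distrib_left)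
  also have "\<dots> = (\<Sum>j<Nx. 2 * (dx j * (X j / s j) * (Z j / s j)))"
  proof (rule sum.cong[OF refl])
    fix j
    show "dx j * (X j / s j) * (X j / s j) - dx j * (Y j / s j) * (Y j / s j)
          + dt^2 * (dx j * (Z j / (dt * s j)) * (Z j / (dt * s j))) = 2 * (dx j * (X j / s j) * (Z j / s j))"
      using assms(1) by (cases "s j = 0") (simp_all add: assms(2) field_simps power2_eq_square)
  qed
  also have "\<dots> = 2 * l2ip Nx dx (\<lambda>j. X j / s j) (\<lambda>j. Z j / s j)"
    unfolding l2ip_def by (simp add: sum_distrib_left)
  finally show ?thesis .
qed

lemma l2sq_nonneg: "(\<And>j. j < Nx \<Longrightarrow> dx j > 0) \<Longrightarrow> l2sq Nx dx f \<ge> 0"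
  unfolding l2sq_def l2ip_def by (rule sum_nonneg) (simp add: mult.assoc less_imp_le)



theorem proposition3p2:
  fixes T0 eps tau0 dt :: real and NH Nx :: nat
    and dx rho :: "nat \<Rightarrow> real"
    and D :: "nat \<Rightarrow> nat \<Rightarrow> nat \<Rightarrow> real" and \<omega> :: "nat \<Rightarrow> nat \<Rightarrow> real"
  assumes "T0 > 0" "eps > 0" "tau0 > 0" "dt > 0" "NH \<ge> 1" "Nx \<ge> 1"
    and "\<And>j. j < Nx \<Longrightarrow> dx j > 0"
    and "\<And>j. j < Nx \<Longrightarrow> rho j > 0"
    and "scheme T0 eps tau0 dt NH Nx dx rho D \<omega>"
  shows "(energy T0 NH Nx dx rho D \<omega> (Suc n) - energy T0 NH Nx dx rho D \<omega> n) / dt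
           + dt * Rh T0 dt NH Nx dx rho D \<omega> n
         = - (1 / (eps * tau0)) * (\<Sum>k=1..NH. real k * l2sq Nx dx (D (Suc n) k))
       \<and> Rh T0 dt NH Nx dx rho D \<omega> n \<ge> 0"
proof
  note sch = assms(9)[unfolded scheme_def]
  let ?A = "Ah T0 Nx dx rho" and ?As = "Ahs T0 Nx dx rho"
  define u where "u k = D (Suc n) k" for k
  define v where "v k = D n k" for k
  define a where "a = \<omega> (Suc n)"
  define b where "b = \<omega> n"
  define R where "R k j = - (real k / tau0) * u k j - (if k = 0 then 0 else sqrt (real k) * ?A (u (k-1)) j)
      + (if k+1 \<le> NH then sqrt (real (k+1)) * ?As (u (k+1)) j else 0) - (if k = 1 then ?A a j else 0)" for k j
  have adj: "\<And>X Y. l2ip Nx dx (?A X) Y = l2ip Nx dx X (?As Y)"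
    by (rule adjoint) (use assms in auto)
  have eqR: "u k j - v k j = dt/eps * R k j" if k: "k \<le> NH" and j: "j < Nx" for k j
  proof -
    have "eps * (u k j - v k j) / dt = R k j"
    proof (cases "k = 1")
      case True
      have h: "eps * (D (Suc n) 1 j - D n 1 j) / dt + Ah T0 Nx dx rho (D (Suc n) 0) j
        - sqrt 2 * (if 2 \<le> NH then Ahs T0 Nx dx rho (D (Suc n) 2) j else 0)
        + Ah T0 Nx dx rho (\<omega> (Suc n)) j
        = - (1 / tau0) * D (Suc n) 1 j" using sch j by blast
      show ?thesis using h True unfolding R_def u_def v_def a_def
        by (simp add: numeral_2_eq_2 split: if_splits)
    next
      case False
      have h: "eps * (D (Suc n) k j - D n k j) / dt
        + (if k = 0 then 0 else sqrt (real k) * Ah T0 Nx dx rho (D (Suc n) (k - 1)) j)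
        - (if k + 1 \<le> NH then sqrt (real (k + 1)) * Ahs T0 Nx dx rho (D (Suc n) (k + 1)) j else 0)
        = - (real k / tau0) * D (Suc n) k j" using sch j k False by blast
      show ?thesis using h False unfolding R_def u_def v_def a_def
        by (simp split: if_splits)
    qed
    then show ?thesis using assms(2,4) by (simp add: field_simps)
  qed
  have E: "energy T0 NH Nx dx rho D \<omega> (Suc n) - energy T0 NH Nx dx rho D \<omega> n + dt^2 * Rh T0 dt NH Nx dx rho D \<omega> n
     = (\<Sum>k\<le>NH. l2ip Nx dx (\<lambda>j. u k j - Dinf rho k j) (\<lambda>j. u k j - v k j))
       + l2ip Nx dx (\<lambda>j. ?A a j / sqrt (rho j)) (\<lambda>j. ?A (\<lambda>i. a i - b i) j / sqrt (rho j))"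
  proof -
    have s1: "(\<Sum>k\<le>NH. l2sq Nx dx (\<lambda>j. u k j - Dinf rho k j)) - (\<Sum>k\<le>NH. l2sq Nx dx (\<lambda>j. v k j - Dinf rho k j))
      + dt^2 * (\<Sum>k\<le>NH. l2sq Nx dx (\<lambda>j. (u k j - v k j) / dt))
      = 2 * (\<Sum>k\<le>NH. l2ip Nx dx (\<lambda>j. u k j - Dinf rho k j) (\<lambda>j. u k j - v k j))"
    proof -
      have "(\<Sum>k\<le>NH. l2sq Nx dx (\<lambda>j. u k j - Dinf rho k j)) - (\<Sum>k\<le>NH. l2sq Nx dx (\<lambda>j. v k j - Dinf rho k j))
      + dt^2 * (\<Sum>k\<le>NH. l2sq Nx dx (\<lambda>j. (u k j - v k j) / dt))
       = (\<Sum>k\<le>NH. l2sq Nx dx (\<lambda>j. u k j - Dinf rho k j) - l2sq Nx dx (\<lambda>j. v k j - Dinf rho k j)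
           + dt^2 * l2sq Nx dx (\<lambda>j. (u k j - v k j) / dt))"
        by (simp add: sum_subtractf sum.distrib sum_distrib_left)
      also have "\<dots> = (\<Sum>k\<le>NH. 2 * l2ip Nx dx (\<lambda>j. u k j - Dinf rho k j) (\<lambda>j. u k j - v k j))"
        by (rule sum.cong[OF refl]) (rule L1, use assms(4) in simp)
      finally show ?thesis by (simp add: sum_distrib_left)
    qed
    have s2: "l2sq Nx dx (\<lambda>j. ?A a j / sqrt (rho j)) - l2sq Nx dx (\<lambda>j. ?A b j / sqrt (rho j))
       + dt^2 * l2sq Nx dx (\<lambda>j. ?A (\<lambda>i. a i - b i) j / (dt * sqrt (rho j)))
       = 2 * l2ip Nx dx (\<lambda>j. ?A a j / sqrt (rho j)) (\<lambda>j. ?A (\<lambda>i. a i - b i) j / sqrt (rho j))"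
      by (rule L2) (use assms(4) in \<open>simp_all add: Ah_diff\<close>)
    show ?thesis
      unfolding energy_def Rh_def u_def[symmetric] v_def[symmetric] a_def[symmetric] b_def[symmetric]
      using s1 s2 by (simp add: algebra_simps)
  qed
  show "Rh T0 dt NH Nx dx rho D \<omega> n \<ge> 0"
    unfolding Rh_def using assms(7)
    by (intro mult_nonneg_nonneg add_nonneg_nonneg sum_nonneg l2sq_nonneg) auto
  show "(energy T0 NH Nx dx rho D \<omega> (Suc n) - energy T0 NH Nx dx rho D \<omega> n) / dt
           + dt * Rh T0 dt NH Nx dx rho D \<omega> n
         = - (1 / (eps * tau0)) * (\<Sum>k=1..NH. real k * l2sq Nx dx (D (Suc n) k))"
  proof -
    define P where "P k = sqrt (real k) * l2ip Nx dx (u k) (?A (u (k-1)))" for k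
    define Q where "Q = l2ip Nx dx (u 1) (?A a)"
    define S where "S = (\<Sum>k=1..NH. real k * l2sq Nx dx (u k))"
    have G: "l2ip Nx dx (\<lambda>j. u k j - Dinf rho k j) (R k) =
       - (real k / tau0) * l2sq Nx dx (u k) - (if k = 0 then 0 else P k)
       + (if k+1 \<le> NH then P (k+1) else 0) - (if k = 1 then Q else 0)" if k: "k \<le> NH" for k
    proof -
      have c0: "l2ip Nx dx (Dinf rho k) (R k) = 0"
      proof (cases "k = 0")
        case True
        have "l2ip Nx dx (Dinf rho k) (R k) = l2ip Nx dx (\<lambda>j. sqrt (rho j)) (?As (u 1))"
          by (rule l2ip_cong) (use True assms(5) in \<open>auto simp: Dinf_def R_def\<close>)
        also have "\<dots> = l2ip Nx dx (?A (\<lambda>j. sqrt (rho j))) (u 1)" by (simp add: adj)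
        also have "\<dots> = l2ip Nx dx (\<lambda>j. 0) (u 1)"
          by (rule l2ip_cong) (use assms(1,8) Ah_sqrt_rho in auto)
        finally show ?thesis by (simp add: l2ip_zero1)
      next
        case False
        then have "Dinf rho k = (\<lambda>j. 0)" by (auto simp: Dinf_def)
        then show ?thesis by (simp add: l2ip_zero1)
      qed
      have sw: "\<And>m. l2ip Nx dx (u m) (?As (u (Suc m))) = l2ip Nx dx (u (Suc m)) (?A (u m))"
        by (simp add: adj[symmetric] l2ip_sym)
      have "l2ip Nx dx (u k) (R k) = - (real k / tau0) * l2sq Nx dx (u k) - (if k = 0 then 0 else P k)
       + (if k+1 \<le> NH then P (k+1) else 0) - (if k = 1 then Q else 0)"
        unfolding R_def[abs_def] P_def Q_def l2sq_def
        by (simp add: l2ip_diff2 l2ip_add2 l2ip_if2 l2ip_scale l2ip_neg_scale sw l2ip_negdiv l2ip_negdiv1 l2ip_zero2)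
      then show ?thesis using c0 by (simp add: l2ip_diff1)
    qed
    have sumG: "(\<Sum>k\<le>NH. l2ip Nx dx (\<lambda>j. u k j - Dinf rho k j) (R k)) = - (1/tau0) * S - Q"
    proof -
      have "(\<Sum>k\<le>NH. l2ip Nx dx (\<lambda>j. u k j - Dinf rho k j) (R k))
        = (\<Sum>k\<le>NH. - (real k / tau0) * l2sq Nx dx (u k)) - (\<Sum>k\<le>NH. (if k = 0 then 0 else P k))
          + (\<Sum>k\<le>NH. (if k+1 \<le> NH then P (k+1) else 0)) - (\<Sum>k\<le>NH. (if k = 1 then Q else 0))"
        by (simp add: G sum_subtractf sum.distrib)
      moreover have "(\<Sum>k\<le>NH. (if k = 1 then Q else 0)) = Q" using assms(5) by simp
      moreover have "(\<Sum>k\<le>NH. (if k = 0 then 0 else P k)) = (\<Sum>k<NH. P (Suc k))"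
        by (simp add: sum.atMost_shift)
      moreover have "(\<Sum>k\<le>NH. (if k+1 \<le> NH then P (k+1) else 0)) = (\<Sum>k<NH. P (Suc k))"
        unfolding lessThan_Suc_atMost[symmetric] sum.lessThan_Suc by simp
      moreover have "(\<Sum>k\<le>NH. - (real k / tau0) * l2sq Nx dx (u k)) = - (1/tau0) * S"
      proof -
        have "(\<Sum>k\<le>NH. - (real k / tau0) * l2sq Nx dx (u k)) = - (1/tau0) * (\<Sum>k\<le>NH. real k * l2sq Nx dx (u k))"
          by (simp add: sum_distrib_left sum_negf[symmetric])
        also have "(\<Sum>k\<le>NH. real k * l2sq Nx dx (u k)) = S"
          unfolding S_def by (simp add: atMost_atLeast0 sum.atLeast_Suc_atMost)
        finally show ?thesis .
      qed
      ultimately show ?thesis by simp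
    qed
    have T1: "(\<Sum>k\<le>NH. l2ip Nx dx (\<lambda>j. u k j - Dinf rho k j) (\<lambda>j. u k j - v k j))
       = dt/eps * (- (1/tau0) * S - Q)"
    proof -
      have "(\<Sum>k\<le>NH. l2ip Nx dx (\<lambda>j. u k j - Dinf rho k j) (\<lambda>j. u k j - v k j))
        = (\<Sum>k\<le>NH. dt/eps * l2ip Nx dx (\<lambda>j. u k j - Dinf rho k j) (R k))"
      proof (rule sum.cong[OF refl])
        fix k assume "k \<in> {..NH}"
        then have "l2ip Nx dx (\<lambda>j. u k j - Dinf rho k j) (\<lambda>j. u k j - v k j)
            = l2ip Nx dx (\<lambda>j. u k j - Dinf rho k j) (\<lambda>j. dt/eps * R k j)"
          by (intro l2ip_cong) (auto simp: eqR)
        then show "l2ip Nx dx (\<lambda>j. u k j - Dinf rho k j) (\<lambda>j. u k j - v k j)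
            = dt/eps * l2ip Nx dx (\<lambda>j. u k j - Dinf rho k j) (R k)"
          using l2ip_scale[of Nx dx "\<lambda>j. u k j - Dinf rho k j" "dt/eps" "R k"] by simp
      qed
      also have "\<dots> = dt/eps * (\<Sum>k\<le>NH. l2ip Nx dx (\<lambda>j. u k j - Dinf rho k j) (R k))"
        by (simp only: sum_distrib_left)
      finally show ?thesis using sumG by simp
    qed
    have T2: "l2ip Nx dx (\<lambda>j. ?A a j / sqrt (rho j)) (\<lambda>j. ?A (\<lambda>i. a i - b i) j / sqrt (rho j)) = dt/eps * Q"
    proof -
      have "l2ip Nx dx (\<lambda>j. ?A a j / sqrt (rho j)) (\<lambda>j. ?A (\<lambda>i. a i - b i) j / sqrt (rho j))
          = l2ip Nx dx (?A a) (\<lambda>j. ?A (\<lambda>i. a i - b i) j / rho j)"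
        unfolding l2ip_def
      proof (rule sum.cong[OF refl])
        fix j assume "j \<in> {..<Nx}"
        then have "rho j > 0" using assms(8) by auto
        then show "dx j * (?A a j / sqrt (rho j)) * (?A (\<lambda>i. a i - b i) j / sqrt (rho j))
           = dx j * ?A a j * (?A (\<lambda>i. a i - b i) j / rho j)"
          by (simp add: field_simps)
      qed
      also have "\<dots> = l2ip Nx dx a (?As (\<lambda>j. ?A (\<lambda>i. a i - b i) j / rho j))" by (rule adj)
      also have "\<dots> = l2ip Nx dx a (\<lambda>j. dt/eps * ?As (u 1) j)"
      proof (rule l2ip_cong)
        fix j assume j: "j < Nx"
        have "(\<lambda>j. ?A (\<lambda>i. a i - b i) j / rho j) = (\<lambda>j. ?A a j / rho j - ?A b j / rho j)"
          by (simp add: Ah_diff diff_divide_distrib)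
        then have "?As (\<lambda>j. ?A (\<lambda>i. a i - b i) j / rho j) j = (u 0 j - sqrt (rho j)) - (v 0 j - sqrt (rho j))"
          using sch j by (simp add: Ahs_diff a_def b_def u_def v_def)
        also have "\<dots> = dt/eps * R 0 j" using eqR[of 0 j] j by simp
        also have "\<dots> = dt/eps * ?As (u 1) j" using assms(5) by (simp add: R_def)
        finally show "?As (\<lambda>j. ?A (\<lambda>i. a i - b i) j / rho j) j = dt/eps * ?As (u 1) j" .
      qed simp
      also have "\<dots> = dt/eps * l2ip Nx dx a (?As (u 1))"
        by (rule l2ip_scale)
      also have "l2ip Nx dx a (?As (u 1)) = Q"
        unfolding Q_def by (simp only: adj[symmetric] l2ip_sym)
      finally show ?thesis .
    qed
    have "energy T0 NH Nx dx rho D \<omega> (Suc n) - energy T0 NH Nx dx rho D \<omega> n + dt^2 * Rh T0 dt NH Nx dx rho D \<omega> n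
       = dt * (- (1 / (eps * tau0)) * S)"
      using E T1 T2 assms(2) by (simp add: field_simps)
    then show ?thesis using assms(4) unfolding S_def u_def
      by (simp add: field_simps power2_eq_square)
  qed
qed

end
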